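(* Let $n,k$ be positive integers, $m=kn+1$, and let $\Delta$ be a $\Gamma_{m,n}$-semimodule. If $a$ is an $m$-generator of $\Delta$, then for every integer $l>0$ the integer interval $[a-l(kn+1),\,a-lkn-1]$ has empty intersection with $\Delta$.
   Context: $\Gamma_{m,n}=\{am+bn:a,b\in\mathbb{Z}_{\ge0}\}$ for coprime positive $m,n$. A $\Gamma_{m,n}$-semimodule is a subset $\Delta\subset\mathbb{Z}_{\ge0}$ with $\Delta+\Gamma_{m,n}\subset\Delta$. An $m$-generator of $\Delta$ is an element $a\in\Delta$ with $a-m\notin\Delta$. *)

theory Defs
  imports Main
begin

definition Gamma :: "nat \<Rightarrow> nat \<Rightarrow> nat set" where
  "Gamma m n = {a * m + b * n | a b. True}"

definition is_semimodule :: "nat \<Rightarrow> nat \<Rightarrow> nat set \<Rightarrow> bool" where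
  "is_semimodule m n \<Delta> \<longleftrightarrow> (\<forall>d\<in>\<Delta>. \<forall>g\<in>Gamma m n. d + g \<in> \<Delta>)"

text \<open>An m-generator: a in Delta with a - m not in Delta (as integers; a - m < 0 counts as not in Delta).\<close>
definition is_m_generator :: "nat \<Rightarrow> nat set \<Rightarrow> nat \<Rightarrow> bool" where
  "is_m_generator m \<Delta> a \<longleftrightarrow> a \<in> \<Delta> \<and> int a - int m \<notin> int ` \<Delta>"

end

theory Submission
  imports Defs
begin

theorem mainTheorem14:
  fixes n k m a :: nat and \<Delta> :: "nat set"
  assumes "0 < n" and "0 < k" and "m = k * n + 1"
    and "is_semimodule m n \<Delta>"
    and "is_m_generator m \<Delta> a"
  shows "\<forall>l::int. l > 0 \<longrightarrow>
           {int a - l * (int k * int n + 1) .. int a - l * int k * int n - 1} \<inter> int ` \<Delta> = {}"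
proof (intro allI impI)
  fix l :: int assume l: "l > 0"
  show "{int a - l * (int k * int n + 1) .. int a - l * int k * int n - 1} \<inter> int ` \<Delta> = {}"
  proof (rule ccontr)
    assume "\<not> ?thesis"
    then obtain x where x: "x \<in> \<Delta>" and lo: "int a - l * (int k * int n + 1) \<le> int x"
      and hi: "int x \<le> int a - l * int k * int n - 1" by auto
    define j where "j = int a - l * int k * int n - int x"
    have j1: "1 \<le> j" using hi j_def by simp
    have jl: "j \<le> l" using lo j_def by (simp add: algebra_simps)
    define c where "c = nat (j - 1)"
    define d where "d = nat ((l - j) * int k)"
    have cd: "int c = j - 1" "int d = (l - j) * int k" using j1 jl assms(2)
      by (simp_all add: c_def d_def)
    have g: "c * m + d * n \<in> Gamma m n" unfolding Gamma_def by blast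
    have mem: "x + (c * m + d * n) \<in> \<Delta>" using assms(4) x g unfolding is_semimodule_def by blast
    have "int (x + (c * m + d * n)) = int x + int c * int m + int d * int n" by simp
    also have "\<dots> = int x + (j - 1) * (int k * int n + 1) + (l - j) * int k * int n"
      using cd assms(3) by simp
    also have "\<dots> = int a - int m" using assms(3) j_def by (simp add: algebra_simps)
    finally have "int a - int m \<in> int ` \<Delta>" using mem by (metis image_eqI)
    thus False using assms(5) unfolding is_m_generator_def by blast
  qed
qed

end
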